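(* Let $q>1$ with conjugate exponent $q'$, let $V$ be a Banach space, $f\in C_c(\mathbb R^d;V)$ and $v\in C^1_0(\mathbb R^d)$ (continuously differentiable, vanishing at infinity). Let $R_1,R_2>0$. Then for any $x,y\in\mathbb R^d$ with $|x-y|\le R_2$ and such that $f(y-z)=0$ whenever $|z|\le R_1$, $$\|(f*v)(y)\|_V\le M\big(\mathbb M_x^{R_1+R_2}\|f\|_V^q(x)\big)^{1/q}\int_{R_1}^\infty(R_2+\rho)^d\Big(\int_{\partial B_1}|\nabla v(\rho w)\cdot w|^{q'}S_1(dw)\Big)^{1/q'}d\rho,$$ where $M=\big(\pi^{d/2}/\Gamma(\tfrac d2+1)\big)^{1/q}(1/d)^{1/q'}$.
   Context: $S_1(dw)$ is surface measure on the unit sphere $\partial B_1\subset\mathbb R^d$ (counting measure on $\{-1,1\}$ when $d=1$). For a locally integrable real function $h$ on $\mathbb R^d$ and $R\ge0$, $\mathbb M_x^Rh(x)=\sup_{r>R}|B_r(x)|^{-1}\int_{B_r(x)}|h(y)|dy$; here it is applied to $h=\|f(\cdot)\|_V^q$. *)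

theory Defs
  imports "HOL-Analysis.Analysis"
begin

text \<open>Surface measure on the unit sphere of a Euclidean space of dimension d, defined as
  the cone measure: S_1(A) = d * Lebesgue measure of the cone {t w : 0 < t < 1, w in A},
  i.e. d times the push-forward of Lebesgue measure on the open unit ball under x / |x|.
  For d = 1 this is counting measure on {-1, 1}.\<close>
definition sphere_measure :: "'a::euclidean_space measure" where
  "sphere_measure = scale_measure (of_nat DIM('a))
     (distr (restrict_space lborel (ball 0 1)) borel (\<lambda>x. x /\<^sub>R norm x))"

definition maximal_fun :: "real \<Rightarrow> ('a::euclidean_space \<Rightarrow> real) \<Rightarrow> 'a \<Rightarrow> real" where
  "maximal_fun R h x =
     (SUP r\<in>{R<..}. (LINT y:ball x r|lborel. \<bar>h y\<bar>) / measure lborel (ball x r))"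

text \<open>Convolution (f * v)(y) = int f(y - z) v(z) dz, as a (Henstock-Kurzweil) integral over R^d,
  which agrees with the Bochner integral for the continuous compactly supported integrands here.\<close>
definition convol :: "('a::euclidean_space \<Rightarrow> 'b::banach) \<Rightarrow> ('a \<Rightarrow> real) \<Rightarrow> 'a \<Rightarrow> 'b" where
  "convol f v y = integral UNIV (\<lambda>z. v z *\<^sub>R f (y - z))"

end

theory Submission
  imports Defs
begin


lemma holder_nn:
  fixes F G :: "'c \<Rightarrow> real" and p q A B :: real
  assumes p: "p > 1" and q: "q = p / (p - 1)"
    and [measurable]: "F \<in> borel_measurable M" "G \<in> borel_measurable M"
    and F0: "\<And>x. F x \<ge> 0" and G0: "\<And>x. G x \<ge> 0"
    and FA: "(\<integral>\<^sup>+x. ennreal (F x powr p) \<partial>M) \<le> ennreal A"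
    and GB: "(\<integral>\<^sup>+x. ennreal (G x powr q) \<partial>M) \<le> ennreal B"
    and A: "A \<ge> 0" and B: "B \<ge> 0"
  shows "(\<integral>\<^sup>+x. ennreal (F x * G x) \<partial>M) \<le> ennreal (A powr (1/p) * B powr (1/q))"
proof -
  have q1: "q > 1" using p unfolding q by (simp add: less_divide_eq)
  have pq: "1/p + 1/q = 1" unfolding q using p by (simp add: field_simps)
  show ?thesis
  proof (cases "A = 0 \<or> B = 0")
    case True
    then show ?thesis
    proof
      assume "A = 0"
      then have "(\<integral>\<^sup>+x. ennreal (F x powr p) \<partial>M) = 0" using FA by simp
      then have "AE x in M. ennreal (F x powr p) = 0"
        by (subst (asm) nn_integral_0_iff_AE) auto
      then have "AE x in M. ennreal (F x * G x) = 0"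
        by eventually_elim (use F0 p in auto)
      then have "(\<integral>\<^sup>+x. ennreal (F x * G x) \<partial>M) = 0"
        by (subst nn_integral_0_iff_AE) auto
      then show ?thesis by simp
    next
      assume "B = 0"
      then have "(\<integral>\<^sup>+x. ennreal (G x powr q) \<partial>M) = 0" using GB by simp
      then have "AE x in M. ennreal (G x powr q) = 0"
        by (subst (asm) nn_integral_0_iff_AE) auto
      then have "AE x in M. ennreal (F x * G x) = 0"
        by eventually_elim (use G0 q1 in auto)
      then have "(\<integral>\<^sup>+x. ennreal (F x * G x) \<partial>M) = 0"
        by (subst nn_integral_0_iff_AE) auto
      then show ?thesis by simp
    qed
  next
    case False
    then have Ap: "A > 0" and Bp: "B > 0" using A B by auto
    define a where "a = A powr (1/p)"
    define b where "b = B powr (1/q)"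
    have ap: "a > 0" and bp: "b > 0" using Ap Bp by (auto simp: a_def b_def)
    have apw: "a powr p = A" using Ap p by (simp add: a_def powr_powr)
    have bpw: "b powr q = B" using Bp q1 by (simp add: b_def powr_powr)
    have pw: "F x * G x \<le> (a*b/(p*A)) * F x powr p + (a*b/(q*B)) * G x powr q" for x
    proof -
      have "(F x / a) * (G x / b) \<le> (F x / a) powr p / p + (G x / b) powr q / q"
        by (rule Youngs_inequality[OF p q1 pq]) (use F0 G0 ap bp in auto)
      also have "(F x / a) powr p = F x powr p / A"
        using F0 ap apw by (simp add: powr_divide)
      also have "(G x / b) powr q = G x powr q / B"
        using G0 bp bpw by (simp add: powr_divide)
      finally have "(F x / a) * (G x / b) \<le> F x powr p / A / p + G x powr q / B / q" .
      then have "a*b*((F x / a) * (G x / b)) \<le> a*b*(F x powr p / A / p + G x powr q / B / q)"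
        using ap bp by (intro mult_left_mono) auto
      then show ?thesis using ap bp by (simp add: field_simps)
    qed
    have c1: "a*b/(p*A) \<ge> 0" "a*b/(q*B) \<ge> 0" using ap bp Ap Bp p q1 by auto
    have "(\<integral>\<^sup>+x. ennreal (F x * G x) \<partial>M)
        \<le> (\<integral>\<^sup>+x. ennreal (a*b/(p*A)) * ennreal (F x powr p) + ennreal (a*b/(q*B)) * ennreal (G x powr q) \<partial>M)"
    proof (intro nn_integral_mono)
      fix x
      have nn: "a*b/(p*A) * F x powr p \<ge> 0" "a*b/(q*B) * G x powr q \<ge> 0" using c1 by (auto intro!: mult_nonneg_nonneg simp del: times_divide_eq_left)
      have "ennreal (F x * G x) \<le> ennreal (a*b/(p*A) * F x powr p + a*b/(q*B) * G x powr q)"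
        using pw by (intro ennreal_leI) auto
      also have "\<dots> = ennreal (a*b/(p*A) * F x powr p) + ennreal (a*b/(q*B) * G x powr q)"
        using nn by (rule ennreal_plus)
      also have "\<dots> = ennreal (a*b/(p*A)) * ennreal (F x powr p) + ennreal (a*b/(q*B)) * ennreal (G x powr q)"
        using c1 by (simp add: ennreal_mult'[symmetric])
      finally show "ennreal (F x * G x) \<le> ennreal (a*b/(p*A)) * ennreal (F x powr p) + ennreal (a*b/(q*B)) * ennreal (G x powr q)" .
    qed
    also have "\<dots> = ennreal (a*b/(p*A)) * (\<integral>\<^sup>+x. ennreal (F x powr p) \<partial>M) + ennreal (a*b/(q*B)) * (\<integral>\<^sup>+x. ennreal (G x powr q) \<partial>M)"
      by (simp add: nn_integral_add nn_integral_cmult)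
    also have "\<dots> \<le> ennreal (a*b/(p*A)) * ennreal A + ennreal (a*b/(q*B)) * ennreal B"
      by (intro add_mono mult_left_mono FA GB) auto
    also have "\<dots> = ennreal (a*b/(p*A) * A + a*b/(q*B) * B)"
      using c1 A B by (subst ennreal_plus) (auto simp: ennreal_mult'[symmetric] simp del: times_divide_eq_left)
    also have "a*b/(p*A) * A + a*b/(q*B) * B = a * b * (1/p + 1/q)"
      using Ap Bp by (simp add: field_simps)
    also have "\<dots> = a * b" using pq by simp
    finally show ?thesis by (simp add: a_def b_def)
  qed
qed




lemma cont_bapply:
  fixes v' :: "'a::euclidean_space \<Rightarrow> 'a \<Rightarrow>\<^sub>L real"
  assumes "continuous_on UNIV v'" "continuous_on S g" "continuous_on S k"
  shows "continuous_on S (\<lambda>t. blinfun_apply (v' (g t)) (k t))"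
proof -
  have "continuous_on S (\<lambda>t. v' (g t))"
    using assms by (metis continuous_on_compose2 subset_UNIV)
  then show ?thesis
    using bounded_bilinear.continuous_on[OF bounded_bilinear_blinfun_apply] assms(3) by blast
qed

lemma ftc_bound:
  fixes v :: "'a::euclidean_space \<Rightarrow> real" and v' :: "'a \<Rightarrow> 'a \<Rightarrow>\<^sub>L real" and z :: 'a
  assumes v_deriv: "\<And>z. (v has_derivative blinfun_apply (v' z)) (at z)"
    and v'_cont: "continuous_on UNIV v'"
    and v_vanish: "(v \<longlongrightarrow> 0) at_infinity"
    and z: "z \<noteq> 0"
  shows "ennreal \<bar>v z\<bar> \<le> (\<integral>\<^sup>+\<rho>. ennreal \<bar>blinfun_apply (v' (\<rho> *\<^sub>R (z /\<^sub>R norm z))) (z /\<^sub>R norm z)\<bar> * indicator {norm z<..} \<rho> \<partial>lborel)"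
    (is "_ \<le> ?I")
proof -
  define u where "u = z /\<^sub>R norm z"
  define t0 where "t0 = norm z"
  have nu: "norm u = 1" using z by (simp add: u_def)
  have zt: "t0 *\<^sub>R u = z" using z by (simp add: u_def t0_def)
  define h where "h t = v (t *\<^sub>R u)" for t
  define h' where "h' t = blinfun_apply (v' (t *\<^sub>R u)) u" for t
  have hd: "(h has_vector_derivative h' t) (at t within S)" for t S
  proof -
    have "((\<lambda>t. t *\<^sub>R u) has_derivative (\<lambda>s. s *\<^sub>R u)) (at t within S)"
      by (auto intro!: derivative_eq_intros)
    from has_derivative_compose[OF this v_deriv]
    have "(h has_derivative (\<lambda>s. blinfun_apply (v' (t *\<^sub>R u)) (s *\<^sub>R u))) (at t within S)"
      by (simp add: h_def[abs_def])
    then show ?thesis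
      by (simp add: has_vector_derivative_def h'_def blinfun.scaleR_right)
  qed
  have h'c: "continuous_on UNIV h'"
    unfolding h'_def by (rule cont_bapply[OF v'_cont]) (auto intro!: continuous_intros)
  have [measurable]: "h' \<in> borel_measurable borel"
    using h'c by (rule borel_measurable_continuous_onI)
  have step: "ennreal \<bar>v z\<bar> \<le> ennreal \<bar>h b\<bar> + ?I" if b: "b > t0" for b
  proof -
    have "(h' has_integral (h b - h t0)) {t0..b}"
      using b by (intro fundamental_theorem_of_calculus hd) auto
    then have hi: "h b - h t0 = integral {t0..b} h'" and hint: "h' integrable_on {t0..b}"
      by (auto simp: integral_unique has_integral_integrable)
    have ai: "(\<lambda>t. \<bar>h' t\<bar>) integrable_on {t0..b}"
      by (rule integrable_continuous_interval, rule continuous_on_subset[OF _ subset_UNIV], intro continuous_intros h'c)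
    have "\<bar>h b - h t0\<bar> \<le> integral {t0..b} (\<lambda>t. \<bar>h' t\<bar>)"
      unfolding hi using integral_norm_bound_integral[OF hint ai] by auto
    have "((\<lambda>t. \<bar>h' t\<bar>) has_integral integral {t0..b} (\<lambda>t. \<bar>h' t\<bar>)) {t0..b}"
      using ai by (rule integrable_integral)
    then have "((\<lambda>t. if t \<in> {t0..b} then \<bar>h' t\<bar> else 0) has_integral integral {t0..b} (\<lambda>t. \<bar>h' t\<bar>)) UNIV"
      by (simp only: has_integral_restrict_UNIV)
    moreover have "(\<lambda>t. indicator {t0..b} t * \<bar>h' t\<bar>) = (\<lambda>t. if t \<in> {t0..b} then \<bar>h' t\<bar> else 0)"
      by (auto simp: indicator_def)
    ultimately have "((\<lambda>t. indicator {t0..b} t * \<bar>h' t\<bar>) has_integral integral {t0..b} (\<lambda>t. \<bar>h' t\<bar>)) UNIV"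
      by simp
    then have "integral\<^sup>N lborel (\<lambda>t. indicator {t0..b} t * \<bar>h' t\<bar>) = integral {t0..b} (\<lambda>t. \<bar>h' t\<bar>)"
      by (intro nn_integral_has_integral_lborel) auto
    then have "ennreal (integral {t0..b} (\<lambda>t. \<bar>h' t\<bar>)) = (\<integral>\<^sup>+t. ennreal (indicator {t0..b} t * \<bar>h' t\<bar>) \<partial>lborel)"
      by simp
    also have "\<dots> \<le> ?I"
    proof (rule nn_integral_mono_AE)
      show "AE t in lborel. ennreal (indicator {t0..b} t * \<bar>h' t\<bar>)
          \<le> ennreal \<bar>blinfun_apply (v' (t *\<^sub>R (z /\<^sub>R norm z))) (z /\<^sub>R norm z)\<bar> * indicator {norm z<..} t"
        using AE_lborel_singleton[of t0]
        by eventually_elim (auto simp: indicator_def h'_def u_def t0_def)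
    qed
    finally have "ennreal (integral {t0..b} (\<lambda>t. \<bar>h' t\<bar>)) \<le> ?I" .
    have "\<bar>v z\<bar> \<le> \<bar>h b\<bar> + \<bar>h b - h t0\<bar>" using zt by (simp add: h_def)
    then have "ennreal \<bar>v z\<bar> \<le> ennreal (\<bar>h b\<bar> + integral {t0..b} (\<lambda>t. \<bar>h' t\<bar>))"
      using \<open>\<bar>h b - h t0\<bar> \<le> _\<close> by (intro ennreal_leI) linarith
    also have "\<dots> = ennreal \<bar>h b\<bar> + ennreal (integral {t0..b} (\<lambda>t. \<bar>h' t\<bar>))"
      using \<open>\<bar>h b - h t0\<bar> \<le> _\<close> by (intro ennreal_plus) auto
    also have "\<dots> \<le> ennreal \<bar>h b\<bar> + ?I"
      using \<open>ennreal (integral {t0..b} _) \<le> ?I\<close> by (rule add_left_mono)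
    finally show ?thesis .
  qed
  have "filterlim (\<lambda>b. b *\<^sub>R u) at_infinity at_top"
    unfolding filterlim_at_infinity_conv_norm_at_top
  proof (rule filterlim_cong[THEN iffD1, OF refl refl _ filterlim_ident])
    show "\<forall>\<^sub>F x in at_top. x = norm (x *\<^sub>R u)"
      using eventually_ge_at_top[of "0::real"] by eventually_elim (simp add: nu)
  qed
  then have "(h \<longlongrightarrow> 0) at_top"
    unfolding h_def using v_vanish by (rule filterlim_compose[of v, rotated])
  then have "((\<lambda>b. ennreal \<bar>h b\<bar> + ?I) \<longlongrightarrow> ennreal \<bar>0\<bar> + ?I) at_top"
    by (intro tendsto_add tendsto_const tendsto_ennrealI tendsto_rabs)
  then have "((\<lambda>b. ennreal \<bar>h b\<bar> + ?I) \<longlongrightarrow> ?I) at_top" by simp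
  then show ?thesis
  proof (rule tendsto_lowerbound)
    show "\<forall>\<^sub>F b in at_top. ennreal \<bar>v z\<bar> \<le> ennreal \<bar>h b\<bar> + ?I"
      using eventually_gt_at_top[of t0] by eventually_elim (rule step)
  qed simp
qed




lemma normalize_meas[measurable]: "(\<lambda>x::'a::euclidean_space. x /\<^sub>R norm x) \<in> borel_measurable borel"
  by measurable

lemma sphere_nn:
  fixes \<phi> :: "'a::euclidean_space \<Rightarrow> ennreal"
  assumes [measurable]: "\<phi> \<in> borel_measurable borel"
  shows "(\<integral>\<^sup>+w. \<phi> w \<partial>sphere_measure) = of_nat DIM('a) * (\<integral>\<^sup>+x. \<phi> (x /\<^sub>R norm x) * indicator (ball 0 1) x \<partial>lborel)"
proof -
  have "(\<integral>\<^sup>+w. \<phi> w \<partial>sphere_measure) = of_nat DIM('a) *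
      (\<integral>\<^sup>+w. \<phi> w \<partial>distr (restrict_space lborel (ball 0 1)) borel (\<lambda>x. x /\<^sub>R norm x))"
    unfolding sphere_measure_def by (rule nn_integral_scale_measure) simp
  also have "(\<integral>\<^sup>+w. \<phi> w \<partial>distr (restrict_space lborel (ball 0 1)) borel (\<lambda>x. x /\<^sub>R norm x))
      = (\<integral>\<^sup>+x. \<phi> (x /\<^sub>R norm x) \<partial>restrict_space lborel (ball 0 1))"
    by (rule nn_integral_distr) (auto intro: measurable_restrict_space1)
  also have "\<dots> = (\<integral>\<^sup>+x. \<phi> (x /\<^sub>R norm x) * indicator (ball 0 1) x \<partial>lborel)"
    by (rule nn_integral_restrict_space) simp
  finally show ?thesis .
qed

lemma ball_scale_nn:
  fixes \<phi> :: "'a::euclidean_space \<Rightarrow> ennreal" and \<rho> :: real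
  assumes [measurable]: "\<phi> \<in> borel_measurable borel" and \<rho>: "\<rho> > 0"
  shows "(\<integral>\<^sup>+z. \<phi> (z /\<^sub>R norm z) * indicator (ball 0 \<rho>) z \<partial>lborel)
      = ennreal (\<rho> ^ DIM('a)) * (\<integral>\<^sup>+x. \<phi> (x /\<^sub>R norm x) * indicator (ball 0 1) x \<partial>lborel)"
proof -
  have [measurable]: "ball (0::'a) \<rho> \<in> sets borel" "ball (0::'a) 1 \<in> sets borel" by auto
  have "(\<integral>\<^sup>+z. \<phi> (z /\<^sub>R norm z) * indicator (ball 0 \<rho>) z \<partial>lborel)
     = (\<integral>\<^sup>+z. \<phi> (z /\<^sub>R norm z) * indicator (ball 0 \<rho>) z
         \<partial>density (distr lborel borel (\<lambda>x. 0 + \<rho> *\<^sub>R x)) (\<lambda>_. ennreal (\<bar>\<rho>\<bar>^DIM('a))))"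
    using lborel_affine[of \<rho> "0::'a"] \<rho> by simp
  also have "\<dots> = (\<integral>\<^sup>+x. ennreal (\<rho>^DIM('a)) * (\<phi> ((\<rho> *\<^sub>R x) /\<^sub>R norm (\<rho> *\<^sub>R x)) * indicator (ball 0 \<rho>) (\<rho> *\<^sub>R x)) \<partial>lborel)"
  proof -
    have "(\<integral>\<^sup>+z. \<phi> (z /\<^sub>R norm z) * indicator (ball 0 \<rho>) z
         \<partial>density (distr lborel borel (\<lambda>x. 0 + \<rho> *\<^sub>R x)) (\<lambda>_. ennreal (\<bar>\<rho>\<bar>^DIM('a))))
       = (\<integral>\<^sup>+z. ennreal (\<bar>\<rho>\<bar>^DIM('a)) * (\<phi> (z /\<^sub>R norm z) * indicator (ball 0 \<rho>) z)
         \<partial>distr lborel borel (\<lambda>x. 0 + \<rho> *\<^sub>R x))"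
      by (rule nn_integral_density) measurable
    also have "\<dots> = (\<integral>\<^sup>+x. ennreal (\<bar>\<rho>\<bar>^DIM('a)) * (\<phi> ((0 + \<rho> *\<^sub>R x) /\<^sub>R norm (0 + \<rho> *\<^sub>R x)) * indicator (ball 0 \<rho>) (0 + \<rho> *\<^sub>R x)) \<partial>lborel)"
      by (rule nn_integral_distr) measurable
    finally show ?thesis using \<rho> by simp
  qed
  also have "\<dots> = (\<integral>\<^sup>+x. ennreal (\<rho>^DIM('a)) * (\<phi> (x /\<^sub>R norm x) * indicator (ball 0 1) x) \<partial>lborel)"
  proof (intro nn_integral_cong)
    fix x :: 'a
    have "(\<rho> *\<^sub>R x) /\<^sub>R norm (\<rho> *\<^sub>R x) = x /\<^sub>R norm x"
      using \<rho> by (cases "x = 0") (auto simp: field_simps)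
    moreover have "indicator (ball 0 \<rho>) (\<rho> *\<^sub>R x) = (indicator (ball 0 1) x :: ennreal)"
      using \<rho> by (auto simp: indicator_def)
    ultimately show "ennreal (\<rho>^DIM('a)) * (\<phi> ((\<rho> *\<^sub>R x) /\<^sub>R norm (\<rho> *\<^sub>R x)) * indicator (ball 0 \<rho>) (\<rho> *\<^sub>R x))
       = ennreal (\<rho>^DIM('a)) * (\<phi> (x /\<^sub>R norm x) * indicator (ball 0 1) x)" by (simp only:)
  qed
  also have "\<dots> = ennreal (\<rho> ^ DIM('a)) * (\<integral>\<^sup>+x. \<phi> (x /\<^sub>R norm x) * indicator (ball 0 1) x \<partial>lborel)"
    by (rule nn_integral_cmult) simp
  finally show ?thesis .
qed

lemma sphere_ball:
  fixes \<phi> :: "'a::euclidean_space \<Rightarrow> ennreal" and \<rho> :: real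
  assumes [measurable]: "\<phi> \<in> borel_measurable borel" and \<rho>: "\<rho> > 0"
  shows "(\<integral>\<^sup>+z. \<phi> (z /\<^sub>R norm z) * indicator (ball 0 \<rho>) z \<partial>lborel)
      = ennreal (\<rho> ^ DIM('a) / DIM('a)) * (\<integral>\<^sup>+w. \<phi> w \<partial>sphere_measure)"
proof -
  have d: "real DIM('a) > 0" by simp
  have eq: "ennreal (\<rho> ^ DIM('a) / DIM('a)) * of_nat DIM('a) = ennreal (\<rho> ^ DIM('a))"
    using d \<rho> by (simp add: ennreal_of_nat_eq_real_of_nat ennreal_mult''[symmetric])
  then show ?thesis
    unfolding sphere_nn[OF assms(1)] ball_scale_nn[OF assms] by (simp only: mult.assoc[symmetric] eq)
qed




lemma bapply_borel:
  fixes v' :: "'a::euclidean_space \<Rightarrow> 'a \<Rightarrow>\<^sub>L real"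
  assumes "continuous_on UNIV v'" "A \<in> borel_measurable M" "B \<in> borel_measurable M"
  shows "(\<lambda>p. blinfun_apply (v' (A p)) (B p)) \<in> borel_measurable M"
proof -
  have "continuous_on UNIV (\<lambda>p::'a\<times>'a. blinfun_apply (v' (fst p)) (snd p))"
    by (rule cont_bapply[OF assms(1)]) (auto intro: continuous_intros)
  then have "(\<lambda>p::'a\<times>'a. blinfun_apply (v' (fst p)) (snd p)) \<in> borel_measurable borel"
    by (rule borel_measurable_continuous_onI)
  from measurable_compose[OF borel_measurable_Pair[OF assms(2,3)] this] show ?thesis by simp
qed

lemma avg_lemma:
  fixes h :: "'a::euclidean_space \<Rightarrow> real"
  assumes hc: "continuous_on UNIV h" and h0: "\<And>u. h u \<ge> 0" and hB: "\<And>u. h u \<le> Bh" and r: "r > 0"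
  shows "(\<integral>\<^sup>+u. ennreal (h u * indicator (ball x r) u) \<partial>lborel) = ennreal (LINT u:ball x r|lborel. \<bar>h u\<bar>)"
    and "(LINT u:ball x r|lborel. \<bar>h u\<bar>) \<le> Bh * measure lborel (ball x r)"
proof -
  have [measurable]: "h \<in> borel_measurable borel" using hc by (rule borel_measurable_continuous_onI)
  have "continuous_on (cball x r) (\<lambda>u. \<bar>h u\<bar>)"
    by (rule continuous_on_rabs[OF continuous_on_subset[OF hc subset_UNIV]])
  then have "integrable lborel (\<lambda>u. indicator (cball x r) u *\<^sub>R \<bar>h u\<bar>)"
    by (intro borel_integrable_compact) auto
  then have "set_integrable lborel (cball x r) (\<lambda>u. \<bar>h u\<bar>)"
    by (simp add: set_integrable_def)
  then have int: "set_integrable lborel (ball x r) (\<lambda>u. \<bar>h u\<bar>)"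
    by (rule set_integrable_subset) auto
  have "(\<integral>\<^sup>+u. ennreal (h u * indicator (ball x r) u) \<partial>lborel)
      = (\<integral>\<^sup>+u. ennreal (indicator (ball x r) u *\<^sub>R \<bar>h u\<bar>) \<partial>lborel)"
    by (intro nn_integral_cong) (auto simp: indicator_def h0)
  also have "\<dots> = ennreal (\<integral>u. indicator (ball x r) u *\<^sub>R \<bar>h u\<bar> \<partial>lborel)"
    by (rule nn_integral_eq_integral) (use int in \<open>auto simp: set_integrable_def\<close>)
  finally show eq: "(\<integral>\<^sup>+u. ennreal (h u * indicator (ball x r) u) \<partial>lborel) = ennreal (LINT u:ball x r|lborel. \<bar>h u\<bar>)"
    by (simp add: set_lebesgue_integral_def)
  have Bh: "Bh \<ge> 0" using h0[of x] hB[of x] by linarith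
  have "ennreal (LINT u:ball x r|lborel. \<bar>h u\<bar>) \<le> (\<integral>\<^sup>+u. ennreal Bh * indicator (ball x r) u \<partial>lborel)"
    unfolding eq[symmetric]
    by (intro nn_integral_mono) (auto simp: indicator_def hB intro!: ennreal_leI)
  also have "\<dots> = ennreal Bh * emeasure lborel (ball x r)"
    by (rule nn_integral_cmult_indicator) auto
  also have "\<dots> = ennreal (Bh * measure lborel (ball x r))"
    using r Bh by (simp add: emeasure_ball content_ball ennreal_mult)
  finally show "(LINT u:ball x r|lborel. \<bar>h u\<bar>) \<le> Bh * measure lborel (ball x r)"
    using Bh r by (subst (asm) ennreal_le_iff) (auto simp: content_ball)
qed

lemma transl_nn:
  fixes g :: "'a::euclidean_space \<Rightarrow> real"
  assumes [measurable]: "g \<in> borel_measurable borel"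
  shows "(\<integral>\<^sup>+z. ennreal (g (y - z) * indicator (ball 0 \<rho>) z) \<partial>lborel)
       = (\<integral>\<^sup>+u. ennreal (g u * indicator (ball y \<rho>) u) \<partial>lborel)"
proof -
  have [measurable]: "ball (0::'a) \<rho> \<in> sets borel" "ball y \<rho> \<in> sets borel" by auto
  let ?G = "\<lambda>z. ennreal (g (y - z) * indicator (ball 0 \<rho>) z)"
  have "(\<integral>\<^sup>+z. ?G z \<partial>lborel) = (\<integral>\<^sup>+z. ?G z \<partial>density (distr lborel borel (\<lambda>x. y + (-1) *\<^sub>R x)) (\<lambda>_. ennreal (\<bar>-1\<bar>^DIM('a))))"
    by (rule arg_cong[where f = "\<lambda>M. \<integral>\<^sup>+z. ?G z \<partial>M"], rule lborel_affine) simp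
  also have "\<dots> = (\<integral>\<^sup>+z. ennreal (\<bar>-1\<bar>^DIM('a)) * ?G z \<partial>distr lborel borel (\<lambda>x. y + (-1) *\<^sub>R x))"
    by (rule nn_integral_density) measurable
  also have "\<dots> = (\<integral>\<^sup>+u. ennreal (\<bar>-1\<bar>^DIM('a)) * ?G (y + (-1) *\<^sub>R u) \<partial>lborel)"
    by (rule nn_integral_distr) measurable
  also have "\<dots> = (\<integral>\<^sup>+u. ennreal (g u * indicator (ball y \<rho>) u) \<partial>lborel)"
    by (intro nn_integral_cong) (simp add: indicator_def dist_norm norm_minus_commute)
  finally show ?thesis .
qed




theorem lemmaB5:
  fixes q q' R1 R2 :: real
    and f :: "'a::euclidean_space \<Rightarrow> 'b::banach"
    and v :: "'a \<Rightarrow> real"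
    and v' :: "'a \<Rightarrow> 'a \<Rightarrow>\<^sub>L real"
    and x y :: 'a
  assumes q: "q > 1" and q': "q' = q / (q - 1)"
    and f_cont: "continuous_on UNIV f"
    and f_supp: "\<exists>K. compact K \<and> (\<forall>z. z \<notin> K \<longrightarrow> f z = 0)"
    and v_deriv: "\<And>z. (v has_derivative blinfun_apply (v' z)) (at z)"
    and v'_cont: "continuous_on UNIV v'"
    and v_vanish: "(v \<longlongrightarrow> 0) at_infinity"
    and R1: "R1 > 0" and R2: "R2 > 0"
    and xy: "dist x y \<le> R2"
    and f_zero: "\<And>z. norm z \<le> R1 \<Longrightarrow> f (y - z) = 0"
  shows "ennreal (norm (convol f v y))
    \<le> ennreal ((pi powr (real DIM('a) / 2) / Gamma (real DIM('a) / 2 + 1)) powr (1 / q)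
                * (1 / real DIM('a)) powr (1 / q')
                * (maximal_fun (R1 + R2) (\<lambda>z. norm (f z) powr q) x) powr (1 / q))
      * (\<integral>\<^sup>+ \<rho>\<in>{R1<..}. ennreal ((R2 + \<rho>) ^ DIM('a)
            * (\<integral>w. \<bar>blinfun_apply (v' (\<rho> *\<^sub>R w)) w\<bar> powr q' \<partial>sphere_measure) powr (1 / q'))
          \<partial>lborel)"
proof -
  define \<omega> where "\<omega> = pi powr (real DIM('a) / 2) / Gamma (real DIM('a) / 2 + 1)"
  define nf where "nf = (\<lambda>z. norm (f z))"
  define h where "h = (\<lambda>u. nf u powr q)"
  define Ms where "Ms = maximal_fun (R1 + R2) h x"
  define \<phi> where "\<phi> = (\<lambda>\<rho> w. \<bar>blinfun_apply (v' (\<rho> *\<^sub>R w)) w\<bar> powr q')"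
  define S where "S = (\<lambda>\<rho>. \<integral>w. \<phi> \<rho> w \<partial>sphere_measure)"
  define G where "G = (\<lambda>\<rho> z. blinfun_apply (v' (\<rho> *\<^sub>R (z /\<^sub>R norm z))) (z /\<^sub>R norm z))"
  define K where "K = \<omega> powr (1/q) * (1 / real DIM('a)) powr (1/q') * Ms powr (1/q)"
  define a where "a = (\<lambda>\<rho>. (R2 + \<rho>) ^ DIM('a) * S \<rho> powr (1/q'))"
  define H where "H = (\<lambda>z \<rho>. if R1 < norm z \<and> norm z < \<rho> then ennreal (nf (y - z) * \<bar>G \<rho> z\<bar>) else 0)"
  have \<omega>pos: "\<omega> > 0" using unit_ball_vol_pos[of "real DIM('a)"] by (simp add: \<omega>_def unit_ball_vol_def)
  have q'1: "q' > 1" using q unfolding q' by (simp add: less_divide_eq)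
  have qq': "1/q + 1/q' = 1" unfolding q' using q by (simp add: field_simps)
  obtain K0 where K0: "compact K0" "\<And>z. z \<notin> K0 \<Longrightarrow> f z = 0" using f_supp by blast
  have nfc: "continuous_on UNIV nf" unfolding nf_def by (intro continuous_intros f_cont)
  have [measurable]: "nf \<in> borel_measurable borel" using nfc by (rule borel_measurable_continuous_onI)
  have nf0: "nf z \<ge> 0" for z by (simp add: nf_def)
  obtain Bf where Bf: "\<And>z. nf z \<le> Bf" "Bf \<ge> 0"
  proof -
    have "compact (nf ` K0)"
      by (rule compact_continuous_image[OF continuous_on_subset[OF nfc subset_UNIV] K0(1)])
    then obtain B where B: "\<forall>t\<in>nf ` K0. norm t \<le> B" by (meson compact_imp_bounded bounded_iff)
    show ?thesis
    proof (rule that[of "max B 0"])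
      fix z show "nf z \<le> max B 0"
        using B K0(2)[of z] by (cases "z \<in> K0") (auto simp: nf_def)
    qed simp
  qed
  have hc: "continuous_on UNIV h"
    unfolding h_def using q by (intro continuous_on_powr' nfc continuous_intros) (auto simp: nf0)
  have h0: "h u \<ge> 0" for u by (simp add: h_def)
  have hB: "h u \<le> Bf powr q" for u
    unfolding h_def using Bf nf0 q by (intro powr_mono2) auto
  have [measurable]: "h \<in> borel_measurable borel" using hc by (rule borel_measurable_continuous_onI)
  define avg where "avg = (\<lambda>r. (LINT u:ball x r|lborel. \<bar>h u\<bar>) / measure lborel (ball x r))"
  have Ms_eq: "Ms = (SUP r\<in>{R1 + R2<..}. avg r)" by (simp add: Ms_def maximal_fun_def avg_def)
  have avg_le: "avg r \<le> Bf powr q" if "r > 0" for r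
  proof -
    have m: "measure lborel (ball x r) > 0"
      using that by (simp add: content_ball unit_ball_vol_def)
    have "(LINT u:ball x r|lborel. \<bar>h u\<bar>) \<le> Bf powr q * measure lborel (ball x r)"
      by (rule avg_lemma(2)[OF hc h0 hB that])
    then show ?thesis using m by (simp add: avg_def divide_le_eq)
  qed
  have bdd: "bdd_above (avg ` {R1 + R2<..})"
    using avg_le R1 R2 by (intro bdd_aboveI[of _ "Bf powr q"]) auto
  have avg_Ms: "avg r \<le> Ms" if "r > R1 + R2" for r
    unfolding Ms_eq using that bdd by (intro cSUP_upper) auto
  have Ms0: "Ms \<ge> 0"
  proof -
    have "avg (R1 + R2 + 1) \<ge> 0" unfolding avg_def set_lebesgue_integral_def by (intro divide_nonneg_nonneg integral_nonneg measure_nonneg) (auto simp: indicator_def)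
    then show ?thesis using avg_Ms[of "R1 + R2 + 1"] by linarith
  qed
  have vc: "continuous_on UNIV v"
    using v_deriv by (meson continuous_at_imp_continuous_on has_derivative_continuous)
  have [measurable]: "v \<in> borel_measurable borel" using vc by (rule borel_measurable_continuous_onI)
  note bapply_meas[measurable (raw)] = bapply_borel[OF v'_cont]
  define g where "g = (\<lambda>z. \<bar>v z\<bar> * nf (y - z))"
  have gc: "continuous_on UNIV g"
    unfolding g_def by (intro continuous_intros continuous_on_compose2[OF nfc] vc) auto
  have g0: "g z \<ge> 0" for z by (simp add: g_def nf0)
  have gsupp: "g z = 0" if "z \<notin> (\<lambda>k. y - k) ` K0" for z
  proof -
    have "y - z \<notin> K0"
    proof
      assume "y - z \<in> K0"
      then have "y - (y - z) \<in> (\<lambda>k. y - k) ` K0" by (rule imageI)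
      with that show False by simp
    qed
    then show ?thesis by (simp add: g_def nf_def K0(2))
  qed
  have gint: "g integrable_on UNIV"
  proof -
    have "compact ((\<lambda>k. y - k) ` K0)"
      by (intro compact_continuous_image K0(1) continuous_intros)
    then obtain c where c: "(\<lambda>k. y - k) ` K0 \<subseteq> cbox (-c) c"
      using bounded_subset_cbox_symmetric compact_imp_bounded by blast
    have "g integrable_on cbox (-c) c"
      by (rule integrable_continuous[OF continuous_on_subset[OF gc subset_UNIV]])
    then show ?thesis
      by (rule integrable_on_superset) (use c gsupp in blast)+
  qed
  have A1: "norm (convol f v y) \<le> integral UNIV g"
  proof (cases "(\<lambda>z. v z *\<^sub>R f (y - z)) integrable_on UNIV")
    case True
    show ?thesis unfolding convol_def
      by (rule integral_norm_bound_integral[OF True gint]) (simp add: g_def nf_def)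
  next
    case False
    then show ?thesis unfolding convol_def using g0
      by (simp add: not_integrable_integral integral_nonneg[OF gint])
  qed
  have A2: "ennreal (integral UNIV g) = (\<integral>\<^sup>+z. ennreal (g z) \<partial>lborel)"
  proof -
    have [measurable]: "g \<in> borel_measurable borel" using gc by (rule borel_measurable_continuous_onI)
    have "integral\<^sup>N lborel g = integral UNIV g"
      by (rule nn_integral_has_integral_lborel) (use g0 gint in auto)
    then show ?thesis by simp
  qed
  have stepA: "ennreal (norm (convol f v y)) \<le> (\<integral>\<^sup>+z. ennreal (g z) \<partial>lborel)"
    using A1 A2 by (metis ennreal_leI)
  have stepB: "ennreal (g z) \<le> (\<integral>\<^sup>+\<rho>. H z \<rho> \<partial>lborel)" for z
  proof (cases "norm z \<le> R1")
    case True
    then show ?thesis by (simp add: g_def nf_def f_zero)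
  next
    case False
    then have z0: "z \<noteq> 0" using R1 by auto
    have [measurable]: "(\<lambda>\<rho>. G \<rho> z) \<in> borel_measurable borel"
      unfolding G_def by measurable
    have "(\<integral>\<^sup>+\<rho>. H z \<rho> \<partial>lborel) = (\<integral>\<^sup>+\<rho>. ennreal (nf (y - z)) * (ennreal \<bar>G \<rho> z\<bar> * indicator {norm z<..} \<rho>) \<partial>lborel)"
      using False by (intro nn_integral_cong) (auto simp: H_def indicator_def ennreal_mult nf0)
    also have "\<dots> = ennreal (nf (y - z)) * (\<integral>\<^sup>+\<rho>. ennreal \<bar>G \<rho> z\<bar> * indicator {norm z<..} \<rho> \<partial>lborel)"
      by (rule nn_integral_cmult) measurable
    also have "\<dots> \<ge> ennreal (nf (y - z)) * ennreal \<bar>v z\<bar>"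
      using ftc_bound[OF v_deriv v'_cont v_vanish z0] unfolding G_def
      by (intro mult_left_mono) auto
    finally show ?thesis by (simp add: g_def ennreal_mult' nf0 mult.commute)
  qed
  have [measurable]: "case_prod H \<in> borel_measurable (lborel \<Otimes>\<^sub>M lborel)"
    unfolding H_def G_def by measurable
  have PSF: "pair_sigma_finite (lborel :: 'a measure) (lborel :: real measure)"
    by (simp add: pair_sigma_finite_def lborel.sigma_finite_measure_axioms)
  have stepC: "(\<integral>\<^sup>+z. (\<integral>\<^sup>+\<rho>. H z \<rho> \<partial>lborel) \<partial>lborel) = (\<integral>\<^sup>+\<rho>. (\<integral>\<^sup>+z. H z \<rho> \<partial>lborel) \<partial>lborel)"
    by (rule pair_sigma_finite.Fubini'[OF PSF, symmetric]) measurable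
  have sph_space: "space (sphere_measure :: 'a measure) = UNIV"
    by (simp add: sphere_measure_def space_scale_measure)
  have sph_sets[measurable_cong]: "sets (sphere_measure :: 'a measure) = sets borel"
    by (simp add: sphere_measure_def)
  have sph_fin: "emeasure (sphere_measure :: 'a measure) (space sphere_measure) \<noteq> \<infinity>"
  proof -
    have "emeasure (sphere_measure :: 'a measure) (space sphere_measure) = (\<integral>\<^sup>+w. 1 \<partial>(sphere_measure :: 'a measure))"
      by simp
    also have "\<dots> = of_nat DIM('a) * (\<integral>\<^sup>+x. 1 * indicator (ball (0::'a) 1) x \<partial>lborel)"
      using sphere_nn[where \<phi>="\<lambda>_::'a. 1"] by simp
    also have "\<dots> = of_nat DIM('a) * emeasure lborel (ball (0::'a) 1)"
      by simp
    finally show ?thesis by (simp add: emeasure_ball ennreal_of_nat_eq_real_of_nat ennreal_mult'[symmetric])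
  qed
  interpret Sf: finite_measure "sphere_measure :: 'a measure" using sph_fin by (rule finite_measureI)
  have [measurable]: "case_prod \<phi> \<in> borel_measurable (lborel \<Otimes>\<^sub>M sphere_measure)"
    unfolding \<phi>_def by measurable
  have [measurable]: "S \<in> borel_measurable lborel"
    unfolding S_def by (rule Sf.borel_measurable_lebesgue_integral) measurable
  have [measurable]: "a \<in> borel_measurable lborel"
    unfolding a_def by measurable
  have S0: "S \<rho> \<ge> 0" for \<rho> unfolding S_def \<phi>_def by (intro Bochner_Integration.integral_nonneg) auto
  have S_nn: "(\<integral>\<^sup>+w. ennreal (\<phi> \<rho> w) \<partial>sphere_measure) = ennreal (S \<rho>)" for \<rho>
  proof -
    have cc: "continuous_on (cball 0 1) (\<lambda>w. v' (\<rho> *\<^sub>R w))"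
      by (rule continuous_on_compose2[OF v'_cont]) (auto intro: continuous_intros)
    have "compact ((\<lambda>w. v' (\<rho> *\<^sub>R w)) ` cball 0 1)"
      by (rule compact_continuous_image[OF cc]) simp
    then obtain C where C: "\<forall>t\<in>(\<lambda>w. v' (\<rho> *\<^sub>R w)) ` cball 0 1. norm t \<le> C"
      by (meson compact_imp_bounded bounded_iff)
    have C0: "C \<ge> 0" using C by (metis image_eqI centre_in_cball norm_ge_zero order_trans zero_le_one)
    have bnd: "\<phi> \<rho> w \<le> C powr q'" if "norm w \<le> 1" for w
    proof -
      have "\<bar>blinfun_apply (v' (\<rho> *\<^sub>R w)) w\<bar> \<le> norm (v' (\<rho> *\<^sub>R w)) * norm w"
        using norm_blinfun[of "v' (\<rho> *\<^sub>R w)" w] by simp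
      also have "\<dots> \<le> C * 1"
        using C C0 that by (intro mult_mono) auto
      finally show ?thesis unfolding \<phi>_def using q'1 by (intro powr_mono2) auto
    qed
    have nw: "norm (z /\<^sub>R norm z) \<le> 1" for z :: 'a by (cases "z = 0") auto
    have "(\<integral>\<^sup>+w. ennreal (\<phi> \<rho> w) \<partial>sphere_measure) = of_nat DIM('a) * (\<integral>\<^sup>+z. ennreal (\<phi> \<rho> (z /\<^sub>R norm z)) * indicator (ball 0 1) z \<partial>lborel)"
      by (rule sphere_nn) measurable
    also have "\<dots> \<le> of_nat DIM('a) * (\<integral>\<^sup>+z. ennreal (C powr q') * indicator (ball (0::'a) 1) z \<partial>lborel)"
    proof -
      have "(\<integral>\<^sup>+z. ennreal (\<phi> \<rho> (z /\<^sub>R norm z)) * indicator (ball (0::'a) 1) z \<partial>lborel)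
          \<le> (\<integral>\<^sup>+z. ennreal (C powr q') * indicator (ball (0::'a) 1) z \<partial>lborel)"
        by (rule nn_integral_mono) (auto simp: indicator_def intro!: ennreal_leI bnd nw)
      then show ?thesis by (rule mult_left_mono) simp
    qed
    also have "\<dots> < \<infinity>"
      by (simp add: nn_integral_cmult_indicator emeasure_ball ennreal_mult_less_top of_nat_less_top)
    finally have fin: "(\<integral>\<^sup>+w. ennreal (\<phi> \<rho> w) \<partial>sphere_measure) \<noteq> \<infinity>" by simp
    have "S \<rho> = enn2real (\<integral>\<^sup>+w. ennreal (\<phi> \<rho> w) \<partial>sphere_measure)"
      unfolding S_def by (rule integral_eq_nn_integral) (auto simp: \<phi>_def)
    then show ?thesis using fin by (simp add: ennreal_enn2real less_top)
  qed
  have stepD: "(\<integral>\<^sup>+z. H z \<rho> \<partial>lborel) \<le> ennreal K * (ennreal (a \<rho>) * indicator {R1<..} \<rho>)" for \<rho>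
  proof (cases "\<rho> > R1")
    case False
    then have "H z \<rho> = 0" for z by (auto simp: H_def)
    then show ?thesis by simp
  next
    case True
    then have \<rho>0: "\<rho> > 0" using R1 by linarith
    define r where "r = R2 + \<rho>"
    have r0: "r > 0" "r > R1 + R2" "\<rho> \<le> r" using True R2 \<rho>0 by (auto simp: r_def)
    define F where "F = (\<lambda>z. nf (y - z) * indicator (ball 0 \<rho>) z)"
    define Gr where "Gr = (\<lambda>z. \<bar>G \<rho> z\<bar> * indicator (ball 0 \<rho>) z)"
    have [measurable]: "ball (0::'a) \<rho> \<in> sets borel" by simp
    have [measurable]: "F \<in> borel_measurable lborel" unfolding F_def by measurable
    have [measurable]: "Gr \<in> borel_measurable lborel" unfolding Gr_def G_def by measurable
    have D1: "(\<integral>\<^sup>+z. H z \<rho> \<partial>lborel) \<le> (\<integral>\<^sup>+z. ennreal (F z * Gr z) \<partial>lborel)"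
      by (intro nn_integral_mono) (auto simp: H_def F_def Gr_def indicator_def)
    define A where "A = Ms * (\<omega> * r ^ DIM('a))"
    define B where "B = \<rho> ^ DIM('a) / DIM('a) * S \<rho>"
    have A0: "A \<ge> 0" using Ms0 \<omega>pos r0 by (simp add: A_def)
    have B0: "B \<ge> 0" using S0 \<rho>0 by (simp add: B_def)
    have FA: "(\<integral>\<^sup>+z. ennreal (F z powr q) \<partial>lborel) \<le> ennreal A"
    proof -
      have "(\<integral>\<^sup>+z. ennreal (F z powr q) \<partial>lborel) = (\<integral>\<^sup>+z. ennreal (h (y - z) * indicator (ball 0 \<rho>) z) \<partial>lborel)"
        using q by (intro nn_integral_cong) (auto simp: F_def h_def indicator_def)
      also have "\<dots> = (\<integral>\<^sup>+u. ennreal (h u * indicator (ball y \<rho>) u) \<partial>lborel)"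
        by (rule transl_nn) measurable
      also have "\<dots> \<le> (\<integral>\<^sup>+u. ennreal (h u * indicator (ball x r) u) \<partial>lborel)"
      proof (intro nn_integral_mono ennreal_leI)
        fix u
        have "ball y \<rho> \<subseteq> ball x r"
        proof
          fix u assume "u \<in> ball y \<rho>"
          then have u: "dist y u < \<rho>" by simp
          have "dist x u \<le> dist x y + dist y u" by (rule dist_triangle)
          then show "u \<in> ball x r" using xy u by (simp add: r_def)
        qed
        then show "h u * indicator (ball y \<rho>) u \<le> h u * indicator (ball x r) u"
          using h0[of u] by (auto simp: indicator_def)
      qed
      also have "\<dots> = ennreal (LINT u:ball x r|lborel. \<bar>h u\<bar>)"
        by (rule avg_lemma(1)[OF hc h0 hB r0(1)])
      also have "(LINT u:ball x r|lborel. \<bar>h u\<bar>) = avg r * measure lborel (ball x r)"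
      proof -
        have "measure lborel (ball x r) > 0" using r0 by (simp add: content_ball unit_ball_vol_def)
        then show ?thesis by (simp add: avg_def)
      qed
      also have "\<dots> \<le> Ms * measure lborel (ball x r)"
        using avg_Ms[OF r0(2)] by (intro mult_right_mono) auto
      also have "measure lborel (ball x r) = \<omega> * r ^ DIM('a)"
        using r0 by (simp add: content_ball unit_ball_vol_def \<omega>_def)
      finally show ?thesis by (simp add: A_def ennreal_leI)
    qed
    have GB: "(\<integral>\<^sup>+z. ennreal (Gr z powr q') \<partial>lborel) \<le> ennreal B"
    proof -
      have "(\<integral>\<^sup>+z. ennreal (Gr z powr q') \<partial>lborel) = (\<integral>\<^sup>+z. ennreal (\<phi> \<rho> (z /\<^sub>R norm z)) * indicator (ball 0 \<rho>) z \<partial>lborel)"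
        using q'1 by (intro nn_integral_cong) (auto simp: Gr_def G_def \<phi>_def indicator_def)
      also have "\<dots> = ennreal (\<rho> ^ DIM('a) / DIM('a)) * (\<integral>\<^sup>+w. ennreal (\<phi> \<rho> w) \<partial>sphere_measure)"
        by (rule sphere_ball[OF _ \<rho>0]) measurable
      also have "\<dots> = ennreal B"
      proof -
        have "ennreal (\<rho> ^ DIM('a) / DIM('a)) * ennreal (S \<rho>) = ennreal (\<rho> ^ DIM('a) / DIM('a) * S \<rho>)"
          using \<rho>0 S0[of \<rho>] by (intro ennreal_mult''[symmetric]) auto
        then show ?thesis by (simp only: S_nn B_def)
      qed
      finally show ?thesis by simp
    qed
    have F0: "F z \<ge> 0" for z by (simp add: F_def nf0)
    have G0: "Gr z \<ge> 0" for z by (simp add: Gr_def)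
    have D2: "(\<integral>\<^sup>+z. ennreal (F z * Gr z) \<partial>lborel) \<le> ennreal (A powr (1/q) * B powr (1/q'))"
      by (rule holder_nn[OF q q' _ _ F0 G0 FA GB A0 B0]) measurable
    have D3: "A powr (1/q) * B powr (1/q') \<le> K * a \<rho>"
    proof -
      define e1 where "e1 = 1/q"
      define e2 where "e2 = 1/q'"
      have e: "e1 > 0" "e2 > 0" "e1 + e2 = 1" using q q'1 qq' by (auto simp: e1_def e2_def)
      have rd: "r ^ DIM('a) > 0" "\<rho> ^ DIM('a) \<ge> 0" using r0 \<rho>0 by auto
      have "A powr e1 = Ms powr e1 * \<omega> powr e1 * (r ^ DIM('a)) powr e1"
        unfolding A_def using Ms0 \<omega>pos rd by (simp add: powr_mult)
      moreover have "B powr e2 = (\<rho> ^ DIM('a)) powr e2 * (1 / real DIM('a)) powr e2 * S \<rho> powr e2"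
      proof -
        have "B = (\<rho> ^ DIM('a) * (1 / real DIM('a))) * S \<rho>" by (simp add: B_def)
        also have "\<dots> powr e2 = (\<rho> ^ DIM('a) * (1 / real DIM('a))) powr e2 * S \<rho> powr e2"
          using S0[of \<rho>] rd powr_mult[of "\<rho> ^ DIM('a) * (1 / real DIM('a))" "S \<rho>" e2] by simp
        also have "(\<rho> ^ DIM('a) * (1 / real DIM('a))) powr e2 = (\<rho> ^ DIM('a)) powr e2 * (1 / real DIM('a)) powr e2"
          using rd powr_mult[of "\<rho> ^ DIM('a)" "1 / real DIM('a)" e2] by simp
        finally show ?thesis .
      qed
      moreover have "(\<rho> ^ DIM('a)) powr e2 \<le> (r ^ DIM('a)) powr e2"
        using e rd r0 \<rho>0 by (intro powr_mono2 power_mono) auto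
      moreover have "(r ^ DIM('a)) powr e1 * (r ^ DIM('a)) powr e2 = r ^ DIM('a)"
        using e rd by (simp add: powr_add[symmetric])
      ultimately have "A powr e1 * B powr e2
          \<le> Ms powr e1 * \<omega> powr e1 * (r ^ DIM('a)) powr e1 * ((r ^ DIM('a)) powr e2 * (1 / real DIM('a)) powr e2 * S \<rho> powr e2)"
        by (auto intro!: mult_left_mono mult_right_mono)
      also have "\<dots> = (\<omega> powr e1 * (1 / real DIM('a)) powr e2 * Ms powr e1) * ((r ^ DIM('a)) powr e1 * (r ^ DIM('a)) powr e2 * S \<rho> powr e2)"
        by (simp add: algebra_simps)
      also have "\<dots> = K * a \<rho>"
        unfolding \<open>(r ^ DIM('a)) powr e1 * (r ^ DIM('a)) powr e2 = r ^ DIM('a)\<close>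
        by (simp add: K_def a_def e1_def e2_def r_def)
      finally show ?thesis by (simp add: e1_def e2_def)
    qed
    have K0': "K \<ge> 0" by (simp add: K_def)
    from D1 D2 D3 have "(\<integral>\<^sup>+z. H z \<rho> \<partial>lborel) \<le> ennreal (K * a \<rho>)"
      by (meson ennreal_leI order_trans)
    then show ?thesis using True K0' by (simp add: ennreal_mult')
  qed
  have "ennreal (norm (convol f v y)) \<le> (\<integral>\<^sup>+z. ennreal (g z) \<partial>lborel)" by (rule stepA)
  also have "\<dots> \<le> (\<integral>\<^sup>+z. (\<integral>\<^sup>+\<rho>. H z \<rho> \<partial>lborel) \<partial>lborel)"
    by (intro nn_integral_mono stepB)
  also have "\<dots> = (\<integral>\<^sup>+\<rho>. (\<integral>\<^sup>+z. H z \<rho> \<partial>lborel) \<partial>lborel)" by (rule stepC)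
  also have "\<dots> \<le> (\<integral>\<^sup>+\<rho>. ennreal K * (ennreal (a \<rho>) * indicator {R1<..} \<rho>) \<partial>lborel)"
    by (intro nn_integral_mono stepD)
  also have "\<dots> = ennreal K * (\<integral>\<^sup>+\<rho>. ennreal (a \<rho>) * indicator {R1<..} \<rho> \<partial>lborel)"
    by (rule nn_integral_cmult) measurable
  finally show ?thesis
    unfolding K_def a_def S_def \<phi>_def Ms_def h_def nf_def \<omega>_def .
qed


end
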